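(* Let $h_{00},h_{11},h_{22},h_{33}>0$, $\det h = h_{00}h_{11}h_{22}h_{33}$, $\beta=\frac{1}{6(\det h)^2}$, and $p(x,y)=x^4+x^3y+xy^3+y^4$, $q(x,y)=5x^4+3x^3y-xy^3-3y^4$. Consider $\dot g_{00} = -\beta\, p(-g_{11},g_{22})\, g_{00}^3$, $\dot g_{11} = -\beta\, q(-g_{11},g_{22})\, g_{00}^2 g_{11}$, $\dot g_{22} = -\beta\, q(g_{22},-g_{11})\, g_{00}^2 g_{22}$, $\dot g_{33} = 3\beta\, p(-g_{11},g_{22})\, g_{00}^2 g_{33}$, with $g_{ii}(0)=h_{ii}$. Then the solution exists for all $t\ge0$, $g_{33}$ is nondecreasing, and $(g_{11}g_{22})^{25} = \eta\,(g_{22}+g_{11})^4(2g_{22}^2-g_{11}g_{22}+2g_{11}^2)^3$ with $\eta = \frac{(h_{11}h_{22})^{25}}{(h_{22}+h_{11})^4(2h_{22}^2-h_{11}h_{22}+2h_{11}^2)^3}$. As $t\to\infty$: $g_{11},g_{22}\to(432\eta)^{1/40}$, $g_{00}\to \left(\frac{h_{00}^3h_{33}}{\det h}\right)^{1/2}(432\eta)^{1/40}$, $g_{33}\to\left(\frac{(\det h)^3}{h_{00}^3h_{33}}\right)^{1/2}(432\eta)^{-3/40}$. If $h_{11}=h_{22}$ the solution is constant. If $h_{11}<h_{22}$, then $g_{11}<g_{22}$ for all $t$, $g_{11}$ is increasing and $g_{22}$ is decreasing.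
   Context: This system is Bach flow $\partial_t g = B$, $g(0)=h$, on $\mathbb{R}\times E(2)$ ($E(2)$ the universal cover of the group of Euclidean motions of the plane) written in a diagonalizing basis: a left-invariant frame $\{\partial_0,e_1,e_2,e_3\}$ with $[e_i,e_j]=\sum \varepsilon_{ijl}E^{lk}e_k$, $E=\mathrm{diag}(-1,-1,0)$, in which the product metric is $g=\mathrm{diag}(g_{00},g_{11},g_{22},g_{33})$; $B$ is the Bach tensor. Along the flow $g_{00}g_{11}g_{22}g_{33}=\det h$ is constant. *)

theory Defs
  imports "HOL-Analysis.Analysis"
begin

definition bach_p :: "real \<Rightarrow> real \<Rightarrow> real" where
  "bach_p x y = x^4 + x^3*y + x*y^3 + y^4"

definition bach_q :: "real \<Rightarrow> real \<Rightarrow> real" where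
  "bach_q x y = 5*x^4 + 3*x^3*y - x*y^3 - 3*y^4"

definition bach_sol ::
  "real \<Rightarrow> real \<Rightarrow> real \<Rightarrow> real \<Rightarrow>
   (real \<Rightarrow> real) \<Rightarrow> (real \<Rightarrow> real) \<Rightarrow> (real \<Rightarrow> real) \<Rightarrow> (real \<Rightarrow> real) \<Rightarrow> bool" where
  "bach_sol h0 h1 h2 h3 g0 g1 g2 g3 \<longleftrightarrow>
     (let \<beta> = 1 / (6 * (h0*h1*h2*h3)^2) in
      g0 0 = h0 \<and> g1 0 = h1 \<and> g2 0 = h2 \<and> g3 0 = h3 \<and>
      (\<forall>t\<ge>0.
        (g0 has_real_derivative (- \<beta> * bach_p (- g1 t) (g2 t) * (g0 t)^3)) (at t within {0..}) \<and>
        (g1 has_real_derivative (- \<beta> * bach_q (- g1 t) (g2 t) * (g0 t)^2 * g1 t)) (at t within {0..}) \<and>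
        (g2 has_real_derivative (- \<beta> * bach_q (g2 t) (- g1 t) * (g0 t)^2 * g2 t)) (at t within {0..}) \<and>
        (g3 has_real_derivative (3 * \<beta> * bach_p (- g1 t) (g2 t) * (g0 t)^2 * g3 t)) (at t within {0..})))"

end

theory Submission
  imports Defs
begin


lemma deriv_cont0:
  assumes D: "\<forall>t\<ge>0. (f has_real_derivative f' t) (at t within {0..})"
  shows "continuous_on {0..} f"
  unfolding continuous_on_eq_continuous_within
proof
  fix x :: real assume "x \<in> {0..}"
  hence "(f has_real_derivative f' x) (at x within {0..})" using D by simp
  thus "continuous (at x within {0..}) f" by (rule DERIV_continuous)
qed

lemma deriv_at0:
  assumes D: "\<forall>t\<ge>0. (f has_real_derivative f' t) (at t within {0..})" and "t > 0"
  shows "(f has_real_derivative f' t) (at t)"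
proof -
  have "t \<in> interior {0::real..}" using assms(2) by simp
  hence "at t within {0..} = at t" by (rule at_within_interior)
  thus ?thesis using D assms(2) by (metis less_imp_le)
qed

lemma mvt0:
  assumes D: "\<forall>t\<ge>0. (f has_real_derivative f' t) (at t within {0..})" and "0 \<le> a" "a < b"
  shows "\<exists>\<xi>. a < \<xi> \<and> \<xi> < b \<and> f b - f a = (b - a) * f' \<xi>"
proof -
  have c: "continuous_on {a..b} f"
    using continuous_on_subset[OF deriv_cont0[OF D]] assms(2) by auto
  have "\<And>x. a < x \<Longrightarrow> x < b \<Longrightarrow> f differentiable (at x)"
  proof -
    fix x assume "a < x" "x < b"
    hence "DERIV f x :> f' x" using deriv_at0[OF D] assms(2) by simp
    thus "f differentiable (at x)" unfolding real_differentiable_def by blast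
  qed
  from MVT[OF assms(3) c this] obtain l z where
    z: "a < z" "z < b" "DERIV f z :> l" "f b - f a = (b - a) * l" by blast
  have "DERIV f z :> f' z" using deriv_at0[OF D] z assms(2) by simp
  with z(3) have "l = f' z" by (rule DERIV_unique)
  with z show ?thesis by blast
qed

lemma deriv_mono0:
  assumes D: "\<forall>t\<ge>0. (f has_real_derivative f' t) (at t within {0..})"
    and P: "\<forall>t\<ge>0. f' t \<ge> 0"
  shows "mono_on {0..} f"
proof (rule mono_onI)
  fix r s :: real assume rs: "r \<in> {0..}" "s \<in> {0..}" "r \<le> s"
  show "f r \<le> f s"
  proof (cases "r < s")
    case True
    from mvt0[OF D _ True] rs obtain \<xi> where "r < \<xi>" "f s - f r = (s - r) * f' \<xi>" by auto
    moreover have "f' \<xi> \<ge> 0" using P rs \<open>r < \<xi>\<close> by auto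
    ultimately show ?thesis using True
      by (metis diff_ge_0_iff_ge less_imp_le mult_nonneg_nonneg)
  qed (use rs in auto)
qed

lemma deriv_smono0:
  assumes D: "\<forall>t\<ge>0. (f has_real_derivative f' t) (at t within {0..})"
    and P: "\<forall>t\<ge>0. f' t > 0"
  shows "strict_mono_on {0..} f"
proof (rule strict_mono_onI)
  fix r s :: real assume rs: "r \<in> {0..}" "s \<in> {0..}" "r < s"
  from mvt0[OF D _ rs(3)] rs obtain \<xi> where "r < \<xi>" "f s - f r = (s - r) * f' \<xi>" by auto
  moreover have "f' \<xi> > 0" using P rs \<open>r < \<xi>\<close> by auto
  ultimately show "f r < f s" using rs by (metis diff_gt_0_iff_gt mult_pos_pos)
qed

lemma deriv_santi0:
  assumes D: "\<forall>t\<ge>0. (f has_real_derivative f' t) (at t within {0..})"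
    and P: "\<forall>t\<ge>0. f' t < 0"
  shows "strict_antimono_on {0..} f"
proof (rule monotone_onI)
  fix r s :: real assume rs: "r \<in> {0..}" "s \<in> {0..}" "r < s"
  from mvt0[OF D _ rs(3)] rs obtain \<xi> where "r < \<xi>" "f s - f r = (s - r) * f' \<xi>" by auto
  moreover have "f' \<xi> < 0" using P rs \<open>r < \<xi>\<close> by auto
  ultimately show "f s < f r" using rs by (metis diff_gt_0_iff_gt diff_less_0_iff_less mult_pos_neg)
qed

lemma deriv_const0:
  assumes D: "\<forall>t\<ge>0. (f has_real_derivative f' t) (at t within {0..})"
    and P: "\<forall>t\<ge>0. f' t = 0" and "t \<ge> 0"
  shows "f t = f 0"
proof (cases "t = 0")
  case False
  with assms(3) have "0 < t" by simp
  from mvt0[OF D _ this] obtain \<xi> where "0 < \<xi>" "f t - f 0 = (t - 0) * f' \<xi>" by auto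
  with P show ?thesis by auto
qed simp

lemma bound_on:
  assumes "continuous_on {0..} (r::real\<Rightarrow>real)"
  shows "\<exists>M. \<forall>s\<in>{0..T}. \<bar>r s\<bar> \<le> M"
proof -
  have "continuous_on {0..T} r" using continuous_on_subset[OF assms] by auto
  hence "compact (r ` {0..T})" by (intro compact_continuous_image) auto
  hence "bounded (r ` {0..T})" by (rule compact_imp_bounded)
  thus ?thesis unfolding bounded_real by auto
qed

lemma gron_zero:
  assumes D: "\<forall>t\<ge>0. (f has_real_derivative f t * r t) (at t within {0..})"
    and C: "continuous_on {0..} r" and f0: "f 0 = 0" and "T \<ge> 0"
  shows "f T = 0"
proof (cases "T = 0")
  case False
  hence T: "0 < T" using assms(4) by simp
  obtain M where M: "\<forall>s\<in>{0..T}. \<bar>r s\<bar> \<le> M" using bound_on[OF C] by blast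
  define w where "w = (\<lambda>u. (f u)^2 * exp (- (2*M*u)))"
  have Dw: "\<forall>t\<ge>0. (w has_real_derivative 2 * (f t)^2 * (r t - M) * exp (-(2*M*t))) (at t within {0..})"
    unfolding w_def
    apply (intro allI impI)
    apply (rule derivative_eq_intros refl | use D in force)+
    apply (simp add: algebra_simps power2_eq_square)
    done
  from mvt0[OF Dw _ T] obtain \<xi> where \<xi>: "0 < \<xi>" "\<xi> < T"
    "w T - w 0 = (T - 0) * (2 * (f \<xi>)^2 * (r \<xi> - M) * exp (-(2*M*\<xi>)))" by auto
  have "\<bar>r \<xi>\<bar> \<le> M" using M \<xi> by auto
  hence "r \<xi> - M \<le> 0" by linarith
  hence "2 * (f \<xi>)^2 * (r \<xi> - M) * exp (-(2*M*\<xi>)) \<le> 0"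
    by (simp add: mult_nonneg_nonpos mult_nonpos_nonneg)
  hence "w T \<le> 0" using \<xi> T f0 by (simp add: w_def mult_nonneg_nonpos)
  hence "(f T)^2 \<le> 0" unfolding w_def by (simp add: mult_le_0_iff)
  thus ?thesis by simp
qed (use f0 in simp)

lemma gron_pos:
  assumes D: "\<forall>t\<ge>0. (f has_real_derivative f t * r t) (at t within {0..})"
    and C: "continuous_on {0..} r" and f0: "f 0 > 0" and "T \<ge> 0"
  shows "f T > 0"
proof (rule ccontr)
  assume "\<not> f T > 0"
  hence "f T \<le> 0" by simp
  have cf: "continuous_on {0..T} f" using continuous_on_subset[OF deriv_cont0[OF D]] by auto
  from IVT2'[of f T 0 0, OF \<open>f T \<le> 0\<close> _ assms(4) cf] f0
  obtain S where S: "0 \<le> S" "S \<le> T" "f S = 0" by auto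
  hence S0: "0 < S" using f0 by (cases "S = 0") auto
  obtain M where M: "\<forall>s\<in>{0..T}. \<bar>r s\<bar> \<le> M" using bound_on[OF C] by blast
  define w where "w = (\<lambda>u. (f u)^2 * exp (2*M*u))"
  have Dw: "\<forall>t\<ge>0. (w has_real_derivative 2 * (f t)^2 * (r t + M) * exp (2*M*t)) (at t within {0..})"
    unfolding w_def
    apply (intro allI impI)
    apply (rule derivative_eq_intros refl | use D in force)+
    apply (simp add: algebra_simps power2_eq_square)
    done
  from mvt0[OF Dw _ S0] obtain \<xi> where \<xi>: "0 < \<xi>" "\<xi> < S"
    "w S - w 0 = (S - 0) * (2 * (f \<xi>)^2 * (r \<xi> + M) * exp (2*M*\<xi>))" by auto
  have "\<bar>r \<xi>\<bar> \<le> M" using M \<xi> S by auto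
  hence "r \<xi> + M \<ge> 0" by linarith
  hence "2 * (f \<xi>)^2 * (r \<xi> + M) * exp (2*M*\<xi>) \<ge> 0" by simp
  hence nn: "S * (2 * (f \<xi>)^2 * (r \<xi> + M) * exp (2*M*\<xi>)) \<ge> 0" using S0 by simp
  have "w S - w 0 = S * (2 * (f \<xi>)^2 * (r \<xi> + M) * exp (2*M*\<xi>))" using \<xi>(3) unfolding diff_0_right .
  with nn have "w S \<ge> w 0" by linarith
  moreover have "w 0 > 0" using f0 by (simp add: w_def)
  moreover have "w S = 0" using S by (simp add: w_def)
  ultimately show False by simp
qed



lemma p_fac: "bach_p (-x) y = (x-y)^2*(x^2+x*y+y^2)"
  unfolding bach_p_def by algebra
lemma q1_fac: "bach_q (-x) y = (x-y)*(5*x^3+2*x^2*y+2*x*y^2+3*y^3)"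
  unfolding bach_q_def by algebra
lemma q2_fac: "bach_q y (-x) = (y-x)*(5*y^3+2*y^2*x+2*y*x^2+3*x^3)"
  unfolding bach_q_def by algebra

lemma B_id: fixes x y k :: real
  defines "C \<equiv> 2*y^2 - x*y + 2*x^2"
  defines "a \<equiv> -k*((x-y)*(5*x^3+2*x^2*y+2*x*y^2+3*y^3))"
  defines "b \<equiv> -k*((y-x)*(5*y^3+2*y^2*x+2*y*x^2+3*x^3))"
  shows "4*(y*b + x*a)*C + 3*(y+x)*(4*y*(y*b) - (x*a*y + x*(y*b)) + 4*x*(x*a)) = 25*(a+b)*(y+x)*C"
  unfolding assms by algebra

lemma C_pos: "x > 0 \<Longrightarrow> y > 0 \<Longrightarrow> 2*y^2 - x*y + 2*(x::real)^2 > 0"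
proof -
  assume "x > 0" "y > 0"
  have "0 \<le> (x - y)^2" by simp
  hence "2*(x*y) \<le> x^2 + y^2" by (simp add: power2_diff algebra_simps)
  moreover have "x^2 > 0" "y^2 > 0" using \<open>x > 0\<close> \<open>y > 0\<close> by auto
  ultimately show ?thesis by linarith
qed

lemma dB_gen:
  fixes fa fb ka kb :: "real \<Rightarrow> real"
  assumes d1: "(fa has_real_derivative fa t * ka t) (at t within S)"
   and d2: "(fb has_real_derivative fb t * kb t) (at t within S)"
  shows "((\<lambda>t. (fb t + fa t)^4 * (2*(fb t)^2 - fa t * fb t + 2*(fa t)^2)^3) has_real_derivative
     (4*(fb t+fa t)^3*(fb t*kb t + fa t*ka t)*(2*(fb t)^2 - fa t * fb t + 2*(fa t)^2)^3 + (fb t+fa t)^4*(3*(2*(fb t)^2 - fa t * fb t + 2*(fa t)^2)^2*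
       (4*fb t*(fb t*kb t) - (fa t*ka t*fb t + fa t*(fb t*kb t)) + 4*fa t*(fa t*ka t))))) (at t within S)"
  apply (rule DERIV_cong)
   apply (rule derivative_intros d1 d2)+
  apply (simp add: eval_nat_numeral algebra_simps)
  done

lemma dB_alg: fixes x y a b C :: real
  shows "4*(y+x)^3*(y*b + x*a)*C^3 + (y+x)^4*(3*C^2*(4*y*(y*b) - (x*a*y + x*(y*b)) + 4*x*(x*a)))
     = (y+x)^3*C^2 * (4*(y*b + x*a)*C + 3*(y+x)*(4*y*(y*b) - (x*a*y + x*(y*b)) + 4*x*(x*a)))"
  by (simp add: eval_nat_numeral algebra_simps)

lemma pow25: "(z::real) ^ 25 = z ^ 24 * z"
proof -
  have "z^25 = z^(24+1)" by simp
  also have "\<dots> = z^24 * z" by (simp only: power_add power_one_right)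
  finally show ?thesis .
qed

locale bsol =
  fixes h0 h1 h2 h3 :: real and g0 g1 g2 g3 :: "real \<Rightarrow> real"
  assumes h0: "h0 > 0" and h1: "h1 > 0" and h2: "h2 > 0" and h3: "h3 > 0"
    and sol: "bach_sol h0 h1 h2 h3 g0 g1 g2 g3"
begin

definition "bt = 1 / (6 * (h0*h1*h2*h3)^2)"
definition "pP t = bach_p (- g1 t) (g2 t)"
definition "pQ1 t = bach_q (- g1 t) (g2 t)"
definition "pQ2 t = bach_q (g2 t) (- g1 t)"
definition "r0 t = - bt * pP t * (g0 t)^2"
definition "r1 t = - bt * pQ1 t * (g0 t)^2"
definition "r2 t = - bt * pQ2 t * (g0 t)^2"
definition "r3 t = 3 * bt * pP t * (g0 t)^2"

lemma bt_pos: "bt > 0" using h0 h1 h2 h3 by (simp add: bt_def)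

lemma inits: "g0 0 = h0" "g1 0 = h1" "g2 0 = h2" "g3 0 = h3"
  using sol unfolding bach_sol_def Let_def by auto

lemma D0: "\<forall>t\<ge>0. (g0 has_real_derivative g0 t * r0 t) (at t within {0..})"
proof (intro allI impI)
  fix t :: real assume t: "t \<ge> 0"
  from sol t have "(g0 has_real_derivative (- bt * pP t * (g0 t)^3)) (at t within {0..})"
    unfolding bach_sol_def Let_def bt_def pP_def by auto
  moreover have "- bt * pP t * (g0 t)^3 = g0 t * r0 t"
    by (simp add: r0_def power3_eq_cube power2_eq_square algebra_simps)
  ultimately show "(g0 has_real_derivative g0 t * r0 t) (at t within {0..})" by simp
qed

lemma D1: "\<forall>t\<ge>0. (g1 has_real_derivative g1 t * r1 t) (at t within {0..})"
proof (intro allI impI)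
  fix t :: real assume t: "t \<ge> 0"
  from sol t have "(g1 has_real_derivative (- bt * pQ1 t * (g0 t)^2 * g1 t)) (at t within {0..})"
    unfolding bach_sol_def Let_def bt_def pQ1_def by auto
  moreover have "- bt * pQ1 t * (g0 t)^2 * g1 t = g1 t * r1 t"
    by (simp add: r1_def algebra_simps)
  ultimately show "(g1 has_real_derivative g1 t * r1 t) (at t within {0..})" by simp
qed

lemma D2: "\<forall>t\<ge>0. (g2 has_real_derivative g2 t * r2 t) (at t within {0..})"
proof (intro allI impI)
  fix t :: real assume t: "t \<ge> 0"
  from sol t have "(g2 has_real_derivative (- bt * pQ2 t * (g0 t)^2 * g2 t)) (at t within {0..})"
    unfolding bach_sol_def Let_def bt_def pQ2_def by auto
  moreover have "- bt * pQ2 t * (g0 t)^2 * g2 t = g2 t * r2 t"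
    by (simp add: r2_def algebra_simps)
  ultimately show "(g2 has_real_derivative g2 t * r2 t) (at t within {0..})" by simp
qed

lemma D3: "\<forall>t\<ge>0. (g3 has_real_derivative g3 t * r3 t) (at t within {0..})"
proof (intro allI impI)
  fix t :: real assume t: "t \<ge> 0"
  from sol t have "(g3 has_real_derivative (3 * bt * pP t * (g0 t)^2 * g3 t)) (at t within {0..})"
    unfolding bach_sol_def Let_def bt_def pP_def by auto
  moreover have "3 * bt * pP t * (g0 t)^2 * g3 t = g3 t * r3 t"
    by (simp add: r3_def algebra_simps)
  ultimately show "(g3 has_real_derivative g3 t * r3 t) (at t within {0..})" by simp
qed

lemma cg: "continuous_on {0..} g0" "continuous_on {0..} g1" "continuous_on {0..} g2" "continuous_on {0..} g3"
  using deriv_cont0[OF D0] deriv_cont0[OF D1] deriv_cont0[OF D2] deriv_cont0[OF D3] by auto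

lemma cr: "continuous_on {0..} r0" "continuous_on {0..} r1" "continuous_on {0..} r2" "continuous_on {0..} r3"
proof -
  have e: "r0 = (\<lambda>t. - bt * bach_p (- g1 t) (g2 t) * (g0 t)^2)"
          "r1 = (\<lambda>t. - bt * bach_q (- g1 t) (g2 t) * (g0 t)^2)"
          "r2 = (\<lambda>t. - bt * bach_q (g2 t) (- g1 t) * (g0 t)^2)"
          "r3 = (\<lambda>t. 3 * bt * bach_p (- g1 t) (g2 t) * (g0 t)^2)"
    by (auto simp: r0_def r1_def r2_def r3_def pP_def pQ1_def pQ2_def)
  show "continuous_on {0..} r0" "continuous_on {0..} r1" "continuous_on {0..} r2" "continuous_on {0..} r3"
    unfolding e bach_p_def bach_q_def using cg by (auto intro!: continuous_intros)
qed

lemma gpos: "t \<ge> 0 \<Longrightarrow> g0 t > 0" "t \<ge> 0 \<Longrightarrow> g1 t > 0" "t \<ge> 0 \<Longrightarrow> g2 t > 0" "t \<ge> 0 \<Longrightarrow> g3 t > 0"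
  using gron_pos[OF D0 cr(1)] gron_pos[OF D1 cr(2)] gron_pos[OF D2 cr(3)] gron_pos[OF D3 cr(4)]
    inits h0 h1 h2 h3 by auto

lemma rate_mult:
  assumes "(f has_real_derivative f t * a) (at t within S)" "(g has_real_derivative g t * b) (at t within S)"
  shows "((\<lambda>x. f x * g x) has_real_derivative (f t * g t) * (a + b)) (at t within S)"
proof -
  have "((\<lambda>x. f x * g x) has_real_derivative (f t * a) * g t + (g t * b) * f t) (at t within S)"
    using DERIV_mult[OF assms] .
  moreover have "(f t * a) * g t + (g t * b) * f t = (f t * g t) * (a + b)" by (simp add: algebra_simps)
  ultimately show ?thesis by simp
qed

lemma cons1: "t \<ge> 0 \<Longrightarrow> g0 t * g1 t * g2 t * g3 t = h0 * h1 * h2 * h3"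
proof -
  assume t: "t \<ge> 0"
  have Df: "\<forall>t\<ge>0. ((\<lambda>x. g0 x * g1 x * g2 x * g3 x) has_real_derivative
      (g0 t * g1 t * g2 t * g3 t) * (r0 t + r1 t + r2 t + r3 t)) (at t within {0..})"
    using rate_mult[OF rate_mult[OF rate_mult[OF D0[rule_format] D1[rule_format]] D2[rule_format]] D3[rule_format]]
    by (simp add: algebra_simps)
  have z: "r0 t + r1 t + r2 t + r3 t = 0" for t
    unfolding r0_def r1_def r2_def r3_def pP_def pQ1_def pQ2_def bach_p_def bach_q_def by algebra
  from deriv_const0[OF Df _ t] z inits show ?thesis by simp
qed

lemma cons2: "t \<ge> 0 \<Longrightarrow> g0 t ^ 3 * g3 t = h0 ^ 3 * h3"
proof -
  assume t: "t \<ge> 0"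
  have Df: "\<forall>t\<ge>0. ((\<lambda>x. g0 x * g0 x * g0 x * g3 x) has_real_derivative
      (g0 t * g0 t * g0 t * g3 t) * (r0 t + r0 t + r0 t + r3 t)) (at t within {0..})"
    using rate_mult[OF rate_mult[OF rate_mult[OF D0[rule_format] D0[rule_format]] D0[rule_format]] D3[rule_format]]
    by (simp add: algebra_simps)
  have z: "r0 t + r0 t + r0 t + r3 t = 0" for t
    unfolding r0_def r3_def by algebra
  from deriv_const0[OF Df _ t] z inits show ?thesis by (simp add: power3_eq_cube)
qed

definition "Kc = h0^3 * h3 / (h0*h1*h2*h3)"

lemma Kc_pos: "Kc > 0" using h0 h1 h2 h3 by (simp add: Kc_def)

lemma g0sq: "t \<ge> 0 \<Longrightarrow> (g0 t)^2 = Kc * g1 t * g2 t"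
proof -
  assume t: "t \<ge> 0"
  have "(g0 t)^2 * (h0*h1*h2*h3) = (g0 t ^ 3 * g3 t) * g1 t * g2 t"
    using cons1[OF t] by (metis (no_types, lifting) mult.assoc mult.commute power2_eq_square power3_eq_cube)
  also have "\<dots> = h0^3*h3 * g1 t * g2 t" using cons2[OF t] by simp
  finally show ?thesis using h0 h1 h2 h3 unfolding Kc_def by (simp add: field_simps)
qed

definition "Cf t = 2*(g2 t)^2 - g1 t * g2 t + 2*(g1 t)^2"
definition "Bf t = (g2 t + g1 t)^4 * (Cf t)^3"
definition "Af t = (g1 t * g2 t)^25"

lemma r1_eq: "r1 t = -(bt*(g0 t)^2)*((g1 t-g2 t)*(5*g1 t^3+2*g1 t^2*g2 t+2*g1 t*g2 t^2+3*g2 t^3))"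
  unfolding r1_def pQ1_def q1_fac by (simp add: algebra_simps)
lemma r2_eq: "r2 t = -(bt*(g0 t)^2)*((g2 t-g1 t)*(5*g2 t^3+2*g2 t^2*g1 t+2*g2 t*g1 t^2+3*g1 t^3))"
  unfolding r2_def pQ2_def q2_fac by (simp add: algebra_simps)

lemma dBf: "t \<ge> 0 \<Longrightarrow> (Bf has_real_derivative Bf t * (25*(r1 t + r2 t))) (at t within {0..})"
proof -
  assume t: "t \<ge> 0"
  have d: "(Bf has_real_derivative
     (4*(g2 t+g1 t)^3*(g2 t*r2 t + g1 t*r1 t)*(Cf t)^3 + (g2 t+g1 t)^4*(3*(Cf t)^2*
       (4*g2 t*(g2 t*r2 t) - (g1 t*r1 t*g2 t + g1 t*(g2 t*r2 t)) + 4*g1 t*(g1 t*r1 t))))) (at t within {0..})"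
    unfolding Bf_def[abs_def] Cf_def
    by (rule dB_gen[where fa=g1 and fb=g2 and ka=r1 and kb=r2 and t=t and S="{0..}", OF D1[rule_format, OF t] D2[rule_format, OF t]])
  have k: "4*(g2 t*r2 t + g1 t*r1 t)*Cf t + 3*(g2 t+g1 t)*
       (4*g2 t*(g2 t*r2 t) - (g1 t*r1 t*g2 t + g1 t*(g2 t*r2 t)) + 4*g1 t*(g1 t*r1 t))
     = 25*(r1 t + r2 t)*(g2 t+g1 t)*Cf t"
    unfolding r1_eq r2_eq Cf_def by (rule B_id)
  have "4*(g2 t+g1 t)^3*(g2 t*r2 t + g1 t*r1 t)*(Cf t)^3 + (g2 t+g1 t)^4*(3*(Cf t)^2*
       (4*g2 t*(g2 t*r2 t) - (g1 t*r1 t*g2 t + g1 t*(g2 t*r2 t)) + 4*g1 t*(g1 t*r1 t)))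
     = (g2 t+g1 t)^3*(Cf t)^2 * (25*(r1 t + r2 t)*(g2 t+g1 t)*Cf t)"
    unfolding dB_alg k ..
  also have "\<dots> = Bf t * (25*(r1 t + r2 t))"
    unfolding Bf_def by (simp add: eval_nat_numeral algebra_simps)
  finally show ?thesis using d by simp
qed

lemma dAf: "t \<ge> 0 \<Longrightarrow> (Af has_real_derivative Af t * (25*(r1 t + r2 t))) (at t within {0..})"
proof -
  assume t: "t \<ge> 0"
  have m: "((\<lambda>x. g1 x * g2 x) has_real_derivative (g1 t * g2 t) * (r1 t + r2 t)) (at t within {0..})"
    using rate_mult[OF D1[rule_format, OF t] D2[rule_format, OF t]] .
  have "(Af has_real_derivative of_nat 25 * (((g1 t * g2 t) * (r1 t + r2 t)) * (g1 t * g2 t)^(25 - Suc 0))) (at t within {0..})"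
    unfolding Af_def by (rule DERIV_power[OF m])
  moreover have "of_nat 25 * (((g1 t * g2 t) * (r1 t + r2 t)) * (g1 t * g2 t)^(25 - Suc 0)) = Af t * (25*(r1 t + r2 t))"
    unfolding Af_def pow25[of "g1 t * g2 t"] by (simp add: algebra_simps)
  ultimately show ?thesis by simp
qed

definition "eta = (h1 * h2)^25 / ((h2 + h1)^4 * (2*h2^2 - h1*h2 + 2*h1^2)^3)"

lemma Bf_pos: "t \<ge> 0 \<Longrightarrow> Bf t > 0"
  unfolding Bf_def Cf_def using gpos[of t] C_pos[of "g1 t" "g2 t"] by simp

lemma rel: "t \<ge> 0 \<Longrightarrow> (g1 t * g2 t)^25 = eta * (g2 t + g1 t)^4 * (2 * (g2 t)^2 - g1 t * g2 t + 2 * (g1 t)^2)^3"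
proof -
  assume t: "t \<ge> 0"
  define Df where "Df x = Af x * Bf 0 - Af 0 * Bf x" for x
  have dD: "\<forall>t\<ge>0. (Df has_real_derivative Df t * (25*(r1 t + r2 t))) (at t within {0..})"
  proof (intro allI impI)
    fix t :: real assume "t \<ge> 0"
    have "((\<lambda>x. Af x * Bf 0 - Af 0 * Bf x) has_real_derivative
      (Af t * (25*(r1 t + r2 t))) * Bf 0 - Af 0 * (Bf t * (25*(r1 t + r2 t)))) (at t within {0..})"
      by (rule DERIV_diff[OF DERIV_cmult_right[OF dAf] DERIV_cmult[OF dBf]]) (use \<open>t \<ge> 0\<close> in auto)
    moreover have "(\<lambda>x. Af x * Bf 0 - Af 0 * Bf x) = Df" unfolding Df_def by auto
    moreover have "(Af t * (25*(r1 t + r2 t))) * Bf 0 - Af 0 * (Bf t * (25*(r1 t + r2 t))) = Df t * (25*(r1 t + r2 t))"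
      unfolding Df_def by (simp add: algebra_simps)
    ultimately show "(Df has_real_derivative Df t * (25*(r1 t + r2 t))) (at t within {0..})"
      by simp
  qed
  have cc: "continuous_on {0..} (\<lambda>t. 25*(r1 t + r2 t))" using cr by (auto intro!: continuous_intros)
  have "Df t = 0" by (rule gron_zero[OF dD cc _ t]) (simp add: Df_def)
  hence "Af t = Af 0 / Bf 0 * Bf t" using Bf_pos[of 0] unfolding Df_def by (simp add: field_simps)
  moreover have "Af 0 / Bf 0 = eta" unfolding Af_def Bf_def Cf_def eta_def inits by simp
  ultimately show ?thesis unfolding Af_def Bf_def Cf_def by (simp add: mult.assoc)
qed

definition "re t = -(bt*(g0 t)^2)*(g2 t*(5*g2 t^3+2*g2 t^2*g1 t+2*g2 t*g1 t^2+3*g1 t^3)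
                                  + g1 t*(5*g1 t^3+2*g1 t^2*g2 t+2*g1 t*g2 t^2+3*g2 t^3))"

lemma dE: "\<forall>t\<ge>0. ((\<lambda>x. g2 x - g1 x) has_real_derivative (g2 t - g1 t) * re t) (at t within {0..})"
proof (intro allI impI)
  fix t :: real assume t: "t \<ge> 0"
  have "((\<lambda>x. g2 x - g1 x) has_real_derivative g2 t * r2 t - g1 t * r1 t) (at t within {0..})"
    by (rule DERIV_diff[OF D2[rule_format, OF t] D1[rule_format, OF t]])
  moreover have "g2 t * r2 t - g1 t * r1 t = (g2 t - g1 t) * re t"
    unfolding r1_eq r2_eq re_def by algebra
  ultimately show "((\<lambda>x. g2 x - g1 x) has_real_derivative (g2 t - g1 t) * re t) (at t within {0..})" by simp
qed

lemma cre: "continuous_on {0..} re"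
  unfolding re_def using cg by (auto intro!: continuous_intros)

lemma mono3: "mono_on {0..} g3"
proof (rule deriv_mono0[OF D3], intro allI impI)
  fix t :: real assume t: "t \<ge> 0"
  have "pP t \<ge> 0" unfolding pP_def p_fac using gpos[OF t] by (simp add: add_pos_pos)
  thus "g3 t * r3 t \<ge> 0" unfolding r3_def using gpos[OF t] bt_pos by simp
qed

lemma eq_case: assumes "h1 = h2" and t: "t \<ge> 0"
  shows "g0 t = h0 \<and> g1 t = h1 \<and> g2 t = h2 \<and> g3 t = h3"
proof -
  have e: "g2 s - g1 s = 0" if "s \<ge> 0" for s
    by (rule gron_zero[OF dE cre _ that]) (simp add: inits assms)
  have z: "r0 s = 0" "r1 s = 0" "r2 s = 0" "r3 s = 0" if "s \<ge> 0" for s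
    using e[OF that] unfolding r0_def r3_def pP_def p_fac r1_eq r2_eq by auto
  have "g0 t = g0 0" by (rule deriv_const0[OF D0 _ t]) (simp add: z)
  moreover have "g1 t = g1 0" by (rule deriv_const0[OF D1 _ t]) (simp add: z)
  moreover have "g2 t = g2 0" by (rule deriv_const0[OF D2 _ t]) (simp add: z)
  moreover have "g3 t = g3 0" by (rule deriv_const0[OF D3 _ t]) (simp add: z)
  ultimately show ?thesis using inits by simp
qed

end

lemma exp_neg_lim: assumes "(c::real) > 0" shows "((\<lambda>t. exp (- (c*t))) \<longlongrightarrow> 0) at_top"
proof -
  have "filterlim (\<lambda>t. c * t) at_top at_top"
    by (rule filterlim_tendsto_pos_mult_at_top[OF tendsto_const assms filterlim_ident])
  hence "filterlim (\<lambda>t. - (c * t)) at_bot at_top" by (rule filterlim_uminus_at_top[THEN iffD1])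
  thus ?thesis by (rule filterlim_compose[OF exp_at_bot])
qed



context bsol begin

lemma lt_case: assumes lt: "h1 < h2"
  shows "(\<forall>t\<ge>0. g1 t < g2 t) \<and> strict_mono_on {0..} g1 \<and> strict_antimono_on {0..} g2 \<and>
         (\<exists>L>0. (g1 \<longlongrightarrow> L) at_top \<and> (g2 \<longlongrightarrow> L) at_top)"
proof -
  have eps: "g2 t - g1 t > 0" if "t \<ge> 0" for t
    by (rule gron_pos[OF dE cre _ that]) (simp add: inits lt)
  define S1 where "S1 t = 5*g1 t^3+2*g1 t^2*g2 t+2*g1 t*g2 t^2+3*g2 t^3" for t
  define S2 where "S2 t = 5*g2 t^3+2*g2 t^2*g1 t+2*g2 t*g1 t^2+3*g1 t^3" for t
  have S1p: "S1 t > 0" and S2p: "S2 t > 0" if "t \<ge> 0" for t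
    unfolding S1_def S2_def using gpos[OF that] by (intro add_pos_pos mult_pos_pos zero_less_power; simp)+
  have kp: "bt * (g0 t)^2 > 0" if "t \<ge> 0" for t using gpos[OF that] bt_pos by simp
  have r1p: "g1 t * r1 t > 0" if t: "t \<ge> 0" for t
  proof -
    have "r1 t = (bt*(g0 t)^2) * ((g2 t - g1 t) * S1 t)" unfolding r1_eq S1_def by (simp add: algebra_simps)
    thus ?thesis using kp[OF t] eps[OF t] S1p[OF t] gpos[OF t] by simp
  qed
  have r2n: "g2 t * r2 t < 0" if t: "t \<ge> 0" for t
  proof -
    have "r2 t = - ((bt*(g0 t)^2) * ((g2 t - g1 t) * S2 t))" unfolding r2_eq S2_def by (simp add: algebra_simps)
    thus ?thesis using kp[OF t] eps[OF t] S2p[OF t] gpos[OF t] by (simp add: mult_pos_neg)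
  qed
  have sm1: "strict_mono_on {0..} g1" by (rule deriv_smono0[OF D1]) (use r1p in auto)
  have sa2: "strict_antimono_on {0..} g2" by (rule deriv_santi0[OF D2]) (use r2n in auto)
  have m1: "mono_on {0..} g1" by (rule deriv_mono0[OF D1]) (use r1p in \<open>auto intro: less_imp_le\<close>)
  have lo1: "g1 t \<ge> h1" if "t \<ge> 0" for t using mono_onD[OF m1, of 0 t] that inits by simp
  have hi2: "g2 t \<le> h2" if "t \<ge> 0" for t
  proof (cases "t = 0")
    case False
    hence "g2 t < g2 0" using monotone_onD[OF sa2, of 0 t] that by simp
    thus ?thesis using inits by simp
  qed (simp add: inits)
  define c where "c = bt * (Kc * h1^2) * (5 * h1^4)"
  have cpos: "c > 0" unfolding c_def using bt_pos Kc_pos h1 by simp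
  have rec: "- re t \<ge> c" if t: "t \<ge> 0" for t
  proof -
    have g12: "g1 t * g2 t \<ge> h1 * h1" using lo1[OF t] eps[OF t] h1 by (intro mult_mono) auto
    have A1: "(g0 t)^2 \<ge> Kc * h1^2" unfolding g0sq[OF t] using g12 Kc_pos
      by (simp add: power2_eq_square mult.assoc mult_left_mono)
    have "g1 t * S1 t = 5 * g1 t ^4 + g1 t * (2*g1 t^2*g2 t+2*g1 t*g2 t^2+3*g2 t^3)"
      unfolding S1_def by (simp add: algebra_simps eval_nat_numeral)
    moreover have "g1 t * (2*g1 t^2*g2 t+2*g1 t*g2 t^2+3*g2 t^3) \<ge> 0" using gpos[OF t] by simp
    moreover have "g1 t ^ 4 \<ge> h1 ^ 4" using lo1[OF t] h1 by (intro power_mono) auto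
    moreover have "g2 t * S2 t \<ge> 0" using gpos[OF t] S2p[OF t] by simp
    ultimately have A2: "g2 t * S2 t + g1 t * S1 t \<ge> 5 * h1^4" by linarith
    have "- re t = bt * (g0 t)^2 * (g2 t * S2 t + g1 t * S1 t)"
      unfolding re_def S1_def S2_def by (simp add: algebra_simps)
    also have "\<dots> \<ge> bt * (Kc * h1^2) * (5 * h1^4)"
      using A1 A2 bt_pos Kc_pos h1 by (intro mult_mono) auto
    finally show ?thesis unfolding c_def .
  qed
  define ef where "ef = (\<lambda>u. g2 u - g1 u)"
  have dEf: "(ef has_real_derivative ef t * re t) (at t within {0..})" if "t \<ge> 0" for t
    unfolding ef_def using dE that by auto
  define w where "w = (\<lambda>u. - (ef u * exp (c * u)))"
  have dw: "\<forall>t\<ge>0. (w has_real_derivative - ((g2 t - g1 t) * exp (c*t) * (re t + c))) (at t within {0..})"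
  proof (intro allI impI)
    fix t :: real assume t: "t \<ge> 0"
    show "(w has_real_derivative - ((g2 t - g1 t) * exp (c*t) * (re t + c))) (at t within {0..})"
      unfolding w_def
      apply (rule DERIV_cong)
       apply (rule derivative_intros dEf[OF t])+
      apply (simp add: ef_def algebra_simps)
      done
  qed
  have mw: "mono_on {0..} w"
  proof (rule deriv_mono0[OF dw], intro allI impI)
    fix t :: real assume t: "t \<ge> 0"
    have "re t + c \<le> 0" using rec[OF t] by linarith
    moreover have "(g2 t - g1 t) * exp (c*t) > 0" using eps[OF t] by simp
    ultimately have "(g2 t - g1 t) * exp (c*t) * (re t + c) \<le> 0"
      by (intro mult_nonneg_nonpos) auto
    thus "- ((g2 t - g1 t) * exp (c*t) * (re t + c)) \<ge> 0" by linarith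
  qed
  have dec: "g2 t - g1 t \<le> (h2 - h1) * exp (- (c*t))" if t: "t \<ge> 0" for t
  proof -
    have "w 0 \<le> w t" using mono_onD[OF mw, of 0 t] t by simp
    hence "(g2 t - g1 t) * exp (c * t) \<le> h2 - h1" unfolding w_def ef_def using inits by simp
    hence "g2 t - g1 t \<le> (h2 - h1) / exp (c * t)" by (simp add: pos_le_divide_eq)
    also have "(h2 - h1) / exp (c * t) = (h2 - h1) * exp (- (c*t))" by (simp add: exp_minus divide_inverse)
    finally show ?thesis .
  qed
  have elim: "((\<lambda>t. g2 t - g1 t) \<longlongrightarrow> 0) at_top"
  proof (rule tendsto_sandwich[of "\<lambda>_. 0" _ _ "\<lambda>t. (h2 - h1) * exp (- (c*t))"])
    show "\<forall>\<^sub>F n in at_top. 0 \<le> g2 n - g1 n"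
      using eventually_ge_at_top[of "0::real"] by eventually_elim (use eps in \<open>auto intro: less_imp_le\<close>)
    show "\<forall>\<^sub>F n in at_top. g2 n - g1 n \<le> (h2 - h1) * exp (- (c*n))"
      using eventually_ge_at_top[of "0::real"] by eventually_elim (use dec in auto)
    show "((\<lambda>_. 0) \<longlongrightarrow> (0::real)) at_top" by simp
    have "((\<lambda>t. (h2 - h1) * exp (- (c*t))) \<longlongrightarrow> (h2 - h1) * 0) at_top"
      by (intro tendsto_mult tendsto_const exp_neg_lim cpos)
    thus "((\<lambda>t. (h2 - h1) * exp (- (c*t))) \<longlongrightarrow> 0) at_top" by simp
  qed
  define L where "L = Sup (g1 ` {0..})"
  have bdd: "bdd_above (g1 ` {0..})"
    unfolding bdd_above_def using eps hi2 by (auto intro!: exI[of _ h2] simp: less_imp_le) (smt (verit) eps hi2)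
  have ne: "g1 ` {0..} \<noteq> {}" by auto
  have upper: "g1 t \<le> L" if "t \<ge> 0" for t unfolding L_def using bdd that by (intro cSup_upper) auto
  have Lpos: "L > 0" using upper[of 0] inits h1 by simp
  have l1: "(g1 \<longlongrightarrow> L) at_top"
  proof (rule order_tendstoI)
    fix a assume "a < L"
    then obtain t0 where t0: "t0 \<ge> 0" "a < g1 t0"
      unfolding L_def using less_cSup_iff[OF ne bdd] by auto
    show "\<forall>\<^sub>F x in at_top. a < g1 x"
      using eventually_ge_at_top[of t0]
    proof eventually_elim
      case (elim x)
      thus ?case using mono_onD[OF m1, of t0 x] t0 by simp
    qed
  next
    fix a assume "L < a"
    show "\<forall>\<^sub>F x in at_top. g1 x < a"
      using eventually_ge_at_top[of "0::real"] by eventually_elim (use upper \<open>L < a\<close> in force)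
  qed
  have "((\<lambda>t. g1 t + (g2 t - g1 t)) \<longlongrightarrow> L + 0) at_top" by (intro tendsto_add l1 elim)
  hence l2: "(g2 \<longlongrightarrow> L) at_top" by simp
  show ?thesis using eps sm1 sa2 l1 l2 Lpos by auto
qed

end



context bsol begin

lemma lims: assumes l1: "(g1 \<longlongrightarrow> L) at_top" and l2: "(g2 \<longlongrightarrow> L) at_top" and Lp: "L > 0"
  shows "(g1 \<longlongrightarrow> (432*eta) powr (1/40)) at_top \<and> (g2 \<longlongrightarrow> (432*eta) powr (1/40)) at_top \<and>
   (g0 \<longlongrightarrow> sqrt (h0^3*h3/(h0*h1*h2*h3)) * (432*eta) powr (1/40)) at_top \<and>
   (g3 \<longlongrightarrow> sqrt ((h0*h1*h2*h3)^3/(h0^3*h3)) * (432*eta) powr (-3/40)) at_top"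
proof -
  have ev: "\<forall>\<^sub>F t in at_top. eta * (g2 t + g1 t)^4 * (2*(g2 t)^2 - g1 t*g2 t + 2*(g1 t)^2)^3 = (g1 t * g2 t)^25"
    using eventually_ge_at_top[of "0::real"] by eventually_elim (simp add: rel)
  have a: "((\<lambda>t. (g1 t * g2 t)^25) \<longlongrightarrow> (L*L)^25) at_top" by (rule tendsto_power[OF tendsto_mult[OF l1 l2]])
  have b: "((\<lambda>t. eta * (g2 t + g1 t)^4 * (2*(g2 t)^2 - g1 t*g2 t + 2*(g1 t)^2)^3) \<longlongrightarrow> eta*(L+L)^4*(2*L^2 - L*L + 2*L^2)^3) at_top"
  proof -
    have s: "((\<lambda>t. g2 t + g1 t) \<longlongrightarrow> L + L) at_top" by (rule tendsto_add[OF l2 l1])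
    have q1: "((\<lambda>t. 2*(g2 t)^2) \<longlongrightarrow> 2*L^2) at_top" by (rule tendsto_mult[OF tendsto_const tendsto_power[OF l2]])
    have q2: "((\<lambda>t. g1 t*g2 t) \<longlongrightarrow> L*L) at_top" by (rule tendsto_mult[OF l1 l2])
    have q3: "((\<lambda>t. 2*(g1 t)^2) \<longlongrightarrow> 2*L^2) at_top" by (rule tendsto_mult[OF tendsto_const tendsto_power[OF l1]])
    have q: "((\<lambda>t. 2*(g2 t)^2 - g1 t*g2 t + 2*(g1 t)^2) \<longlongrightarrow> 2*L^2 - L*L + 2*L^2) at_top"
      by (rule tendsto_add[OF tendsto_diff[OF q1 q2] q3])
    show ?thesis
      by (rule tendsto_mult[OF tendsto_mult[OF tendsto_const tendsto_power[OF s]] tendsto_power[OF q]])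
  qed
  have b': "((\<lambda>t. (g1 t * g2 t)^25) \<longlongrightarrow> eta*(L+L)^4*(2*L^2 - L*L + 2*L^2)^3) at_top"
    using Lim_transform_eventually[OF b ev] .
  have eq: "(L*L)^25 = eta*(L+L)^4*(2*L^2 - L*L + 2*L^2)^3"
    using tendsto_unique[OF trivial_limit_at_top_linorder a b'] .
  have "L^40 * L^10 = (432*eta) * L^10"
  proof -
    have "L^40 * L^10 = (L*L)^25" by (simp add: power_mult_distrib power_add[symmetric])
    also have "\<dots> = eta*(L+L)^4*(2*L^2 - L*L + 2*L^2)^3" by (rule eq)
    also have "\<dots> = (432*eta) * L^10" by (simp add: eval_nat_numeral algebra_simps)
    finally show ?thesis .
  qed
  moreover have "L^10 \<noteq> 0" using Lp by simp
  ultimately have L40: "L^40 = 432*eta" by (metis mult_right_cancel)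
  have Lp40: "L powr 40 = 432*eta" using L40 Lp by (simp add: powr_numeral)
  have LL: "(432*eta) powr (1/40) = L"
  proof -
    have "(L powr 40) powr (1/40) = L powr (40 * (1/40))" by (rule powr_powr)
    also have "\<dots> = L" using Lp by simp
    finally show ?thesis unfolding Lp40 .
  qed
  have LL3: "(432*eta) powr (-3/40) = 1 / L^3"
  proof -
    have "(L powr 40) powr (-3/40) = L powr (40 * (-3/40))" by (rule powr_powr)
    hence "(432*eta) powr (-3/40) = L powr (-3)" unfolding Lp40 by simp
    also have "\<dots> = 1 / L^3" using Lp by (simp add: powr_minus powr_numeral divide_inverse)
    finally show ?thesis .
  qed
  have g0e: "\<forall>\<^sub>F t in at_top. sqrt (Kc * (g1 t * g2 t)) = g0 t"
    using eventually_ge_at_top[of "0::real"]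
  proof eventually_elim
    case (elim t)
    show ?case by (rule real_sqrt_unique) (use g0sq[OF elim] gpos[OF elim] in \<open>auto simp: mult.assoc\<close>)
  qed
  have c0: "((\<lambda>t. sqrt (Kc * (g1 t * g2 t))) \<longlongrightarrow> sqrt (Kc * (L*L))) at_top"
    by (rule tendsto_real_sqrt[OF tendsto_mult[OF tendsto_const tendsto_mult[OF l1 l2]]])
  have sK: "sqrt (Kc * (L*L)) = sqrt Kc * L" using Lp by (simp add: real_sqrt_mult)
  have l0: "(g0 \<longlongrightarrow> sqrt Kc * L) at_top"
    using Lim_transform_eventually[OF c0 g0e] sK by simp
  have g3e: "\<forall>\<^sub>F t in at_top. (h0*h1*h2*h3) / (g0 t * g1 t * g2 t) = g3 t"
    using eventually_ge_at_top[of "0::real"]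
  proof eventually_elim
    case (elim t)
    show ?case using cons1[OF elim] gpos[OF elim] by (simp add: field_simps)
  qed
  have c3: "((\<lambda>t. (h0*h1*h2*h3) / (g0 t * g1 t * g2 t)) \<longlongrightarrow> (h0*h1*h2*h3) / (sqrt Kc * L * L * L)) at_top"
    using Kc_pos Lp by (intro tendsto_divide[OF tendsto_const tendsto_mult[OF tendsto_mult[OF l0 l1] l2]]) auto
  have l3: "(g3 \<longlongrightarrow> (h0*h1*h2*h3) / (sqrt Kc * L * L * L)) at_top"
    using Lim_transform_eventually[OF c3 g3e] .
  define dh where "dh = h0*h1*h2*h3"
  have dhp: "dh > 0" unfolding dh_def using h0 h1 h2 h3 by simp
  have "sqrt (dh^3/(h0^3*h3)) * sqrt Kc = sqrt (dh^3/(h0^3*h3) * Kc)" by (rule real_sqrt_mult[symmetric])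
  also have "dh^3/(h0^3*h3) * Kc = dh^2" unfolding Kc_def dh_def[symmetric] using h0 h3 dhp
    by (simp add: field_simps eval_nat_numeral)
  finally have sq: "sqrt (dh^3/(h0^3*h3)) * sqrt Kc = dh" using dhp by simp
  have sA: "sqrt (dh^3/(h0^3*h3)) = dh / sqrt Kc" using sq Kc_pos by (simp add: eq_divide_eq)
  have t3: "(h0*h1*h2*h3) / (sqrt Kc * L * L * L) = sqrt ((h0*h1*h2*h3)^3/(h0^3*h3)) * (1 / L^3)"
    unfolding dh_def[symmetric] sA using Kc_pos Lp by (simp add: field_simps eval_nat_numeral)
  have t0: "sqrt Kc * L = sqrt (h0^3*h3/(h0*h1*h2*h3)) * (432*eta) powr (1/40)"
    unfolding LL Kc_def ..
  have l0': "(g0 \<longlongrightarrow> sqrt (h0^3*h3/(h0*h1*h2*h3)) * (432*eta) powr (1/40)) at_top"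
    using l0 unfolding t0 .
  have l3': "(g3 \<longlongrightarrow> sqrt ((h0*h1*h2*h3)^3/(h0^3*h3)) * (432*eta) powr (-3/40)) at_top"
    using l3 unfolding t3 LL3[symmetric] .
  have l1': "(g1 \<longlongrightarrow> (432*eta) powr (1/40)) at_top" using l1 unfolding LL .
  have l2': "(g2 \<longlongrightarrow> (432*eta) powr (1/40)) at_top" using l2 unfolding LL .
  show ?thesis using l1' l2' l0' l3' by blast
qed

lemma swap: "bsol h0 h2 h1 h3 g0 g2 g1 g3"
proof -
  have ep: "bach_p (- g2 t) (g1 t) = bach_p (- g1 t) (g2 t)" for t unfolding bach_p_def by algebra
  have eq1: "bach_q (- g2 t) (g1 t) = bach_q (g2 t) (- g1 t)" for t unfolding bach_q_def by algebra
  have eq2: "bach_q (g1 t) (- g2 t) = bach_q (- g1 t) (g2 t)" for t unfolding bach_q_def by algebra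
  have d: "h0*h2*h1*h3 = h0*h1*h2*h3" by simp
  show ?thesis
    unfolding bsol_def using h0 h1 h2 h3 sol unfolding bach_sol_def Let_def
    by (simp only: d ep eq1 eq2) auto
qed

end



lemma quad_pos: "(0::real) < 2*x^2 - x + 2"
proof -
  have "0 \<le> (4*x-1)*(4*x-1)" by simp
  hence "0 \<le> 16*(x*x) - 8*x + 1" by (simp add: algebra_simps)
  moreover have "x^2 = x*x" by (simp add: power2_eq_square)
  ultimately show ?thesis by linarith
qed

lemma dphi_id0: fixes l D P :: real assumes "l > 0" and Deq: "D = 2*l^2 - l + 2" and Peq: "P = 1 + l"
  shows "((25/l - 4/P - 3*(4*l-1)/D)/40) * (8+4*l+4*l^2+8*l^3) = (3*l^3+2*l^2+2*l+5)/l"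
proof -
  have D: "D > 0" using Deq quad_pos[of l] by simp
  have P: "P > 0" using Peq assms(1) by simp
  have s: "8+4*l+4*l^2+8*l^3 = 4*P*D" unfolding Deq Peq by algebra
  have e1: "((25/l - 4/P - 3*(4*l-1)/D)/40) * (4*P*D) = (25*P*D - 4*l*D - 3*(4*l-1)*l*P) / (10*l)"
    using D P assms(1) by (simp add: field_simps)
  have e2: "25*P*D - 4*l*D - 3*(4*l-1)*l*P = 10*(3*l^3+2*l^2+2*l+5)"
    unfolding Deq Peq by algebra
  have e3: "(10*(3*l^3+2*l^2+2*l+5)) / (10*l) = (3*l^3+2*l^2+2*l+5)/l"
    by (rule mult_divide_mult_cancel_left) simp
  show ?thesis unfolding s e1 e2 e3 ..
qed

lemma dphi_id: fixes l :: real assumes "l > 0"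
  shows "((25/l - 4/(1+l) - 3*(4*l-1)/(2*l^2 - l + 2))/40) * (8+4*l+4*l^2+8*l^3) = (3*l^3+2*l^2+2*l+5)/l"
  by (rule dphi_id0[OF assms refl refl])

lemma E1_gen: fixes A ww R l Y bt K :: real assumes "A * ww = R / l" "l \<noteq> 0"
  shows "Y*(-A)*(-(l-1)*(bt*K*l^2 * ww * Y^6)) = Y*(l-1)*(bt*K*l*Y^6)*R"
proof -
  have "Y*(-A)*(-(l-1)*(bt*K*l^2 * ww * Y^6)) = Y*(l-1)*(bt*K*l^2*Y^6)*(A*ww)" by (simp add: algebra_simps)
  also have "\<dots> = Y*(l-1)*(bt*K*l^2*Y^6)*(R/l)" unfolding assms(1) ..
  also have "\<dots> = Y*(l-1)*(bt*K*l*Y^6)*R" using assms(2) by (simp add: power2_eq_square field_simps)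
  finally show ?thesis .
qed

lemma E1_id: fixes l Y bt K :: real assumes "l > 0"
  shows "Y*(-((25/l - 4/(1+l) - 3*(4*l-1)/(2*l^2 - l + 2))/40))*(-(l-1)*(bt*K*l^2*(8+4*l+4*l^2+8*l^3)*Y^6))
    = Y * (-bt * bach_q (-Y) (l*Y) * (K*l*Y^2))"
proof -
  have i: "((25/l - 4/(1+l) - 3*(4*l-1)/(2*l^2 - l + 2))/40) * (8+4*l+4*l^2+8*l^3) = (3*l^3+2*l^2+2*l+5)/l"
    by (rule dphi_id[OF assms])
  have "Y*(-((25/l - 4/(1+l) - 3*(4*l-1)/(2*l^2 - l + 2))/40))*(-(l-1)*(bt*K*l^2*(8+4*l+4*l^2+8*l^3)*Y^6))
      = Y*(l-1)*(bt*K*l*Y^6)*(3*l^3+2*l^2+2*l+5)"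
    by (rule E1_gen[OF i]) (use assms in simp)
  also have "\<dots> = Y * (-bt * bach_q (-Y) (l*Y) * (K*l*Y^2))"
    unfolding bach_q_def by algebra
  finally show ?thesis .
qed

lemma E2_id: fixes l Y bt K :: real assumes "l > 0"
  shows "(-(l-1)*(bt*K*l^2*(8+4*l+4*l^2+8*l^3)*Y^6)) * Y + (Y*(-((25/l - 4/(1+l) - 3*(4*l-1)/(2*l^2 - l + 2))/40))*(-(l-1)*(bt*K*l^2*(8+4*l+4*l^2+8*l^3)*Y^6))) * l
    = (l*Y) * (-bt * bach_q (l*Y) (-Y) * (K*l*Y^2))"
proof -
  have e: "Y*(-((25/l - 4/(1+l) - 3*(4*l-1)/(2*l^2 - l + 2))/40))*(-(l-1)*(bt*K*l^2*(8+4*l+4*l^2+8*l^3)*Y^6))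
    = Y * (-bt * bach_q (-Y) (l*Y) * (K*l*Y^2))" by (rule E1_id[OF assms])
  show ?thesis unfolding e unfolding bach_q_def by algebra
qed

lemma E0_id: fixes l Y Z bt K :: real assumes "l > 0" "Z > 0" "Z^2 = K*l"
  shows "(inverse Z / 2 * (K * (-(l-1)*(bt*K*l^2*(8+4*l+4*l^2+8*l^3)*Y^6)))) * Y
     + (Y*(-((25/l - 4/(1+l) - 3*(4*l-1)/(2*l^2 - l + 2))/40))*(-(l-1)*(bt*K*l^2*(8+4*l+4*l^2+8*l^3)*Y^6))) * Z
    = (Z*Y) * (-bt * bach_p (-Y) (l*Y) * (K*l*Y^2))"
proof -
  have e: "Y*(-((25/l - 4/(1+l) - 3*(4*l-1)/(2*l^2 - l + 2))/40))*(-(l-1)*(bt*K*l^2*(8+4*l+4*l^2+8*l^3)*Y^6))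
    = Y * (-bt * bach_q (-Y) (l*Y) * (K*l*Y^2))" by (rule E1_id[OF assms(1)])
  have iz: "inverse Z / 2 * K = Z / (2*l)" using assms by (simp add: field_simps power2_eq_square)
  have "(inverse Z / 2 * (K * (-(l-1)*(bt*K*l^2*(8+4*l+4*l^2+8*l^3)*Y^6)))) * Y
      = (inverse Z / 2 * K) * (-(l-1)*(bt*K*l^2*(8+4*l+4*l^2+8*l^3)*Y^6)) * Y" by (simp add: algebra_simps)
  also have "\<dots> = Z * (-(l-1)*(bt*K*l*(8+4*l+4*l^2+8*l^3)*Y^6)) * Y / 2"
    unfolding iz using assms(1) by (simp add: power2_eq_square)
  finally have f: "(inverse Z / 2 * (K * (-(l-1)*(bt*K*l^2*(8+4*l+4*l^2+8*l^3)*Y^6)))) * Y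
      = Z * (-(l-1)*(bt*K*l*(8+4*l+4*l^2+8*l^3)*Y^6)) * Y / 2" .
  show ?thesis unfolding f e unfolding bach_q_def bach_p_def by algebra
qed



lemma deriv_mvt_closed:
  fixes f f' :: "real \<Rightarrow> real" and a b :: real
  assumes "a < b" and D: "\<forall>x. a \<le> x \<and> x \<le> b \<longrightarrow> DERIV f x :> f' x"
  shows "\<exists>z. a < z \<and> z < b \<and> f b - f a = (b - a) * f' z"
proof -
  have c: "continuous_on {a..b} f"
    by (rule continuous_at_imp_continuous_on) (use D in \<open>auto intro: DERIV_isCont\<close>)
  have d: "f differentiable (at x)" if "a < x" "x < b" for x
  proof -
    have "a \<le> x \<and> x \<le> b" using that by auto
    hence "DERIV f x :> f' x" using D by blast
    thus ?thesis unfolding real_differentiable_def by blast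
  qed
  from MVT[OF assms(1) c d] obtain l z where z: "a < z" "z < b" "DERIV f z :> l" "f b - f a = (b - a) * l"
    by blast
  have "a \<le> z \<and> z \<le> b" using z by auto
  hence "DERIV f z :> f' z" using D by blast
  with z(3) have "l = f' z" by (rule DERIV_unique)
  with z show ?thesis by blast
qed

definition qd :: "real \<Rightarrow> real" where "qd l = 2*l^2 - l + 2"

lemma qd_pos: "qd l > 0" unfolding qd_def by (rule quad_pos)

lemma qd_deriv: "DERIV qd l :> 4*l - 1"
  unfolding qd_def[abs_def]
  apply (rule DERIV_cong)
   apply (rule derivative_intros)+
  apply simp
  done

locale exi =
  fixes h0 h1 h2 h3 :: real
  assumes h0: "h0 > 0" and h1: "h1 > 0" and h2: "h2 > 0" and h3: "h3 > 0" and lt: "h1 < h2"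
begin

definition "dh = h0*h1*h2*h3"
definition "bt = 1/(6*dh^2)"
definition "Kc = h0^3*h3/dh"
definition "l0 = h2/h1"
definition "phi l = (25*ln l - 4*ln (1+l) - 3*ln (qd l))/40"
definition "dphi l = (25/l - 4/(1+l) - 3*(4*l-1)/qd l)/40"
definition "X l = exp (ln h1 + phi l0 - phi l)"
definition "Hf l = bt*Kc*l^2*(8+4*l+4*l^2+8*l^3)*(X l)^6"
definition "Gi l = 1/((l-1)*Hf l)"
definition "bb = l0 + 1"
definition "T l = integral {l..bb} Gi - integral {l0..bb} Gi"
definition "cc = l0 + 1/2"
definition "Lam t = (THE l. 1 < l \<and> l < bb \<and> T l = t)"

lemma dh_pos: "dh > 0" unfolding dh_def using h0 h1 h2 h3 by simp
lemma bt_pos: "bt > 0" unfolding bt_def using dh_pos by simp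
lemma Kc_pos: "Kc > 0" unfolding Kc_def using dh_pos h0 h3 by simp
lemma l0_gt: "l0 > 1" unfolding l0_def using h1 lt by simp
lemma cc_bb: "l0 < cc" "cc < bb" "1 < cc" using l0_gt by (auto simp: cc_def bb_def)

lemma phi_deriv: assumes "l > 0" shows "DERIV phi l :> dphi l"
proof -
  have a: "DERIV (\<lambda>x. ln x) l :> 1/l" using DERIV_ln_divide[OF assms] .
  have b: "DERIV (\<lambda>x. ln (1+x)) l :> 1/(1+l) * (0+1)"
    by (rule DERIV_chain2[OF DERIV_ln_divide DERIV_add[OF DERIV_const DERIV_ident]]) (use assms in simp)
  have c: "DERIV (\<lambda>x. ln (qd x)) l :> 1/(qd l) * (4*l-1)"
    by (rule DERIV_chain2[OF DERIV_ln_divide qd_deriv]) (rule qd_pos)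
  have "DERIV (\<lambda>x. (25*ln x - 4*ln(1+x) - 3*ln(qd x))/40) l :> (25*(1/l) - 4*(1/(1+l)*(0+1)) - 3*(1/qd l*(4*l-1)))/40"
    by (intro DERIV_cdivide DERIV_diff DERIV_cmult a b c)
  moreover have "(25*(1/l) - 4*(1/(1+l)*(0+1)) - 3*(1/qd l*(4*l-1)))/40 = dphi l"
    unfolding dphi_def by simp
  ultimately show ?thesis unfolding phi_def[abs_def] by simp
qed

lemma X_pos: "X l > 0" unfolding X_def by simp

lemma X_deriv: assumes "l > 0" shows "DERIV X l :> X l * (- dphi l)"
proof -
  have "DERIV (\<lambda>x. exp (ln h1 + phi l0 - phi x)) l :> exp (ln h1 + phi l0 - phi l) * (0 - dphi l)"
    by (rule DERIV_chain2[OF DERIV_exp DERIV_diff[OF DERIV_const phi_deriv[OF assms]]])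
  thus ?thesis unfolding X_def[abs_def] by simp
qed

lemma Hf_pos: "l > 0 \<Longrightarrow> Hf l > 0"
  unfolding Hf_def using bt_pos Kc_pos X_pos[of l] by (simp add: add_pos_pos)

lemma X_cont: "l > 0 \<Longrightarrow> isCont X l" using X_deriv DERIV_isCont by blast

lemma Hf_cont: "l > 0 \<Longrightarrow> isCont Hf l"
  unfolding Hf_def[abs_def] by (intro continuous_intros X_cont)

lemma Gi_cont: "l > 1 \<Longrightarrow> isCont Gi l"
  unfolding Gi_def[abs_def] using Hf_pos[of l] by (intro continuous_intros Hf_cont) auto

lemma Gi_pos: "l > 1 \<Longrightarrow> Gi l > 0" unfolding Gi_def using Hf_pos[of l] by simp

lemma T_deriv: assumes "1 < l" "l < bb" shows "DERIV T l :> - Gi l"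
proof -
  define a where "a = (1 + l)/2"
  have a: "1 < a" "a < l" using assms by (auto simp: a_def)
  have c: "continuous_on {a..bb} Gi"
    by (rule continuous_at_imp_continuous_on) (use a Gi_cont in auto)
  have "((\<lambda>x. integral {x..bb} Gi) has_real_derivative - Gi l) (at l within {a..bb})"
    by (rule integral_has_real_derivative'[OF c]) (use a assms in auto)
  moreover have "at l within {a..bb} = at l"
    by (rule at_within_interior) (use a assms in auto)
  ultimately have "((\<lambda>x. integral {x..bb} Gi) has_real_derivative - Gi l) (at l)" by simp
  hence "((\<lambda>x. integral {x..bb} Gi - integral {l0..bb} Gi) has_real_derivative - Gi l - 0) (at l)"
    by (rule DERIV_diff[OF _ DERIV_const])
  thus ?thesis unfolding T_def[abs_def] by simp
qed

lemma T_cont: "1 < l \<Longrightarrow> l < bb \<Longrightarrow> isCont T l" using T_deriv DERIV_isCont by blast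

lemma T_dec: assumes "1 < u" "u < v" "v < bb" shows "T v < T u"
proof -
  have "\<forall>x. u \<le> x \<and> x \<le> v \<longrightarrow> DERIV T x :> - Gi x" using assms T_deriv by auto
  from deriv_mvt_closed[OF assms(2) this] obtain z where z: "u < z" "z < v" "T v - T u = (v - u) * - Gi z"
    by blast
  have "Gi z > 0" using Gi_pos z assms by simp
  hence "(v - u) * - Gi z < 0" using assms by (simp add: mult_pos_neg)
  with z show ?thesis by simp
qed

lemma T_inj: "1 < u \<Longrightarrow> u < bb \<Longrightarrow> 1 < v \<Longrightarrow> v < bb \<Longrightarrow> T u = T v \<Longrightarrow> u = v"
  using T_dec by (metis less_irrefl linorder_neqE_linordered_idom)

lemma T_l0: "T l0 = 0" unfolding T_def by simp

lemma Hf_bound: "\<exists>B>0. \<forall>l\<in>{1..l0}. Hf l \<le> B"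
proof -
  have "continuous_on {1..l0} Hf"
    by (rule continuous_at_imp_continuous_on) (auto intro: Hf_cont)
  hence "compact (Hf ` {1..l0})" by (intro compact_continuous_image) auto
  hence "bounded (Hf ` {1..l0})" by (rule compact_imp_bounded)
  then obtain B0 where B0: "\<forall>l\<in>{1..l0}. \<bar>Hf l\<bar> \<le> B0" unfolding bounded_real by auto
  show ?thesis
    by (rule exI[of _ "max B0 1"]) (use B0 in \<open>auto intro: le_max_iff_disj[THEN iffD2]\<close>)
qed

lemma T_lower: obtains B where "B > 0" "\<And>l. 1 < l \<Longrightarrow> l \<le> l0 \<Longrightarrow> T l \<ge> (ln (l0 - 1) - ln (l - 1)) / B"
proof -
  obtain B where B: "B > 0" "\<forall>l\<in>{1..l0}. Hf l \<le> B" using Hf_bound by blast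
  have "T l \<ge> (ln (l0 - 1) - ln (l - 1)) / B" if l: "1 < l" "l \<le> l0" for l
  proof (cases "l = l0")
    case True thus ?thesis by (simp add: T_l0)
  next
    case False
    hence ll: "l < l0" using l by simp
    define Dfn where "Dfn = (\<lambda>m. T m + ln (m - 1) / B)"
    have dD: "\<forall>x. l \<le> x \<and> x \<le> l0 \<longrightarrow> DERIV Dfn x :> - Gi x + 1 / (x - 1) / B"
    proof (intro allI impI)
      fix x assume x: "l \<le> x \<and> x \<le> l0"
      hence x1: "1 < x" "x < bb" using l l0_gt by (auto simp: bb_def)
      have lg: "DERIV (\<lambda>m. ln (m - 1)) x :> 1/(x-1) * (1 - 0)"
        by (rule DERIV_chain2[OF DERIV_ln_divide DERIV_diff[OF DERIV_ident DERIV_const]]) (use x1 in simp)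
      have "DERIV (\<lambda>m. T m + ln (m - 1) / B) x :> - Gi x + (1/(x-1) * (1 - 0)) / B"
        by (rule DERIV_add[OF T_deriv[OF x1] DERIV_cdivide[OF lg]])
      thus "DERIV Dfn x :> - Gi x + 1 / (x - 1) / B" unfolding Dfn_def by simp
    qed
    from deriv_mvt_closed[OF ll dD] obtain z where z: "l < z" "z < l0"
      "Dfn l0 - Dfn l = (l0 - l) * (- Gi z + 1 / (z - 1) / B)" by blast
    have z1: "1 < z" using z l by simp
    have "Hf z \<le> B" using B z z1 by auto
    hence "(z - 1) * Hf z \<le> (z - 1) * B" using z1 by (intro mult_left_mono) auto
    hence "1 / ((z - 1) * B) \<le> 1 / ((z - 1) * Hf z)"
      using z1 Hf_pos[of z] by (intro divide_left_mono) auto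
    hence "1 / (z - 1) / B \<le> Gi z" unfolding Gi_def by (simp add: divide_divide_eq_left)
    hence "(l0 - l) * (- Gi z + 1 / (z - 1) / B) \<le> 0" using ll by (intro mult_nonneg_nonpos) auto
    hence "Dfn l0 \<le> Dfn l" using z by linarith
    thus ?thesis unfolding Dfn_def T_l0 by (simp add: diff_divide_distrib)
  qed
  with B that show ?thesis by blast
qed

lemma T_unbdd: "\<exists>l. 1 < l \<and> l < l0 \<and> T l > M"
proof -
  obtain B where B: "B > 0" "\<And>l. 1 < l \<Longrightarrow> l \<le> l0 \<Longrightarrow> T l \<ge> (ln (l0 - 1) - ln (l - 1)) / B"
    using T_lower by blast
  define e where "e = exp (- (B * \<bar>M\<bar> + 1))"
  have "B * \<bar>M\<bar> \<ge> 0" using B by simp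
  hence e: "0 < e" "e < 1" unfolding e_def by auto
  define l where "l = 1 + (l0 - 1) * e"
  have "(l0 - 1) * e < (l0 - 1) * 1" using e l0_gt by (intro mult_strict_left_mono) auto
  hence ee: "(l0 - 1) * e < l0 - 1" by simp
  have l: "1 < l" "l < l0" unfolding l_def using e l0_gt ee by (simp add: mult_pos_pos, linarith)
  have "ln (l - 1) = ln (l0 - 1) + ln e" unfolding l_def using e l0_gt by (simp add: ln_mult)
  also have "ln e = - (B * \<bar>M\<bar> + 1)" unfolding e_def by simp
  finally have "(ln (l0 - 1) - ln (l - 1)) / B = (B * \<bar>M\<bar> + 1) / B" by simp
  also have "\<dots> = \<bar>M\<bar> + 1 / B" using B by (simp add: field_simps)
  finally have "T l \<ge> \<bar>M\<bar> + 1 / B" using B(2)[OF l(1)] l by simp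
  moreover have "1 / B > 0" using B by simp
  ultimately have "T l > M" by linarith
  with l show ?thesis by blast
qed

lemma T_cc: "T cc < 0" using T_dec[of l0 cc] l0_gt cc_bb T_l0 by simp

lemma Lam_ex: assumes "t > T cc" shows "1 < Lam t \<and> Lam t < cc \<and> T (Lam t) = t"
proof -
  obtain l1 where l1: "1 < l1" "l1 < l0" "T l1 > t" using T_unbdd by blast
  have cont: "continuous_on {l1..cc} T"
    by (rule continuous_at_imp_continuous_on) (use l1 cc_bb in \<open>auto intro!: T_cont\<close>)
  obtain l where l: "l1 \<le> l" "l \<le> cc" "T l = t"
    using IVT2'[of T cc t l1, OF less_imp_le[OF assms] less_imp_le[OF l1(3)] _ cont] l1 cc_bb by auto
  have lc: "l < cc" using l assms by (metis less_irrefl order_le_less)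
  have P: "1 < l \<and> l < bb \<and> T l = t" using l l1 lc cc_bb by auto
  have "Lam t = l" unfolding Lam_def
  proof (rule the_equality)
    show "1 < l \<and> l < bb \<and> T l = t" by (rule P)
  next
    fix m assume "1 < m \<and> m < bb \<and> T m = t"
    thus "m = l" using T_inj P by metis
  qed
  thus ?thesis using P lc by simp
qed

lemma Lam_T: assumes "1 < l" "l < cc" shows "Lam (T l) = l"
proof -
  have "T l > T cc" using T_dec[of l cc] assms cc_bb by simp
  from Lam_ex[OF this] have "1 < Lam (T l)" "Lam (T l) < cc" "T (Lam (T l)) = T l" by auto
  thus ?thesis using T_inj[of "Lam (T l)" l] assms cc_bb by simp
qed

lemma Lam_0: "Lam 0 = l0" using Lam_T[of l0] l0_gt cc_bb T_l0 by simp

lemma Lam_deriv: assumes "t > T cc" shows "DERIV Lam t :> - (Lam t - 1) * Hf (Lam t)"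
proof -
  note L = Lam_ex[OF assms]
  have cont: "isCont Lam t"
  proof -
    have "isCont Lam (T (Lam t))"
    proof (rule isCont_inverse_function2[where a="(1 + Lam t)/2" and b="(Lam t + cc)/2" and x="Lam t" and f=T and g=Lam])
      show "(1 + Lam t) / 2 < Lam t" "Lam t < (Lam t + cc) / 2" using L by auto
    next
      fix z assume z: "(1 + Lam t) / 2 \<le> z" "z \<le> (Lam t + cc) / 2"
      hence z1: "1 < z" "z < cc" using L by auto
      show "Lam (T z) = z" by (rule Lam_T[OF z1])
      show "isCont T z" using z1 cc_bb by (intro T_cont) auto
    qed
    thus ?thesis using L by simp
  qed
  have d: "DERIV T (Lam t) :> - Gi (Lam t)" using L cc_bb by (intro T_deriv) auto
  have "DERIV Lam t :> inverse (- Gi (Lam t))"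
  proof (rule DERIV_inverse_function[where f=T and g=Lam and x=t and a="T cc" and b="t+1"])
    show "DERIV T (Lam t) :> - Gi (Lam t)" by (rule d)
    show "- Gi (Lam t) \<noteq> 0" using Gi_pos[of "Lam t"] L by simp
    show "T cc < t" by (rule assms)
    show "t < t + 1" by simp
    show "\<And>y. T cc < y \<Longrightarrow> y < t + 1 \<Longrightarrow> T (Lam y) = y" using Lam_ex by blast
    show "isCont Lam t" by (rule cont)
  qed
  moreover have "inverse (- Gi (Lam t)) = - (Lam t - 1) * Hf (Lam t)"
    unfolding Gi_def using L by (simp add: algebra_simps)
  ultimately show ?thesis by simp
qed

end



lemma sum_rates: fixes x y z bt :: real
  shows "(- bt * bach_p (-x) y * z^2) + (- bt * bach_q (-x) y * z^2) + (- bt * bach_q y (-x) * z^2) + 3*bt*bach_p (-x) y * z^2 = 0"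
  unfolding bach_p_def bach_q_def by algebra

context exi begin

definition "S1 t = X (Lam t)"
definition "S2 t = Lam t * X (Lam t)"
definition "S0 t = sqrt (Kc * Lam t) * X (Lam t)"
definition "S3 t = dh / (S0 t * S1 t * S2 t)"

lemma Lam_gt: "t > T cc \<Longrightarrow> Lam t > 1" using Lam_ex by blast

lemma S0sq: "t > T cc \<Longrightarrow> (S0 t)^2 = Kc * Lam t * (X (Lam t))^2"
  unfolding S0_def using Lam_gt[of t] Kc_pos by (simp add: power_mult_distrib)

lemma dS1: assumes t: "t > T cc"
  shows "DERIV S1 t :> S1 t * (- bt * bach_q (- S1 t) (S2 t) * (S0 t)^2)"
proof -
  define l where "l = Lam t"
  have lp: "l > 0" "l > 1" using Lam_gt[OF t] by (auto simp: l_def)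
  have c: "DERIV (\<lambda>x. X (Lam x)) t :> X l * - dphi l * (- (l - 1) * Hf l)"
    unfolding l_def by (rule DERIV_chain2[OF X_deriv Lam_deriv[OF t]]) (use lp l_def in simp)
  have e: "X l * - dphi l * (- (l - 1) * Hf l) = X l * (-bt * bach_q (- X l) (l * X l) * (Kc*l*(X l)^2))"
    unfolding dphi_def qd_def Hf_def by (rule E1_id[OF lp(1)])
  show ?thesis using c unfolding e S1_def S2_def S0sq[OF t] l_def[symmetric] by simp
qed

lemma dS2: assumes t: "t > T cc"
  shows "DERIV S2 t :> S2 t * (- bt * bach_q (S2 t) (- S1 t) * (S0 t)^2)"
proof -
  define l where "l = Lam t"
  have lp: "l > 0" "l > 1" using Lam_gt[OF t] by (auto simp: l_def)
  have c: "DERIV (\<lambda>x. X (Lam x)) t :> X l * - dphi l * (- (l - 1) * Hf l)"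
    unfolding l_def by (rule DERIV_chain2[OF X_deriv Lam_deriv[OF t]]) (use lp l_def in simp)
  have m: "DERIV (\<lambda>x. Lam x * X (Lam x)) t :> (- (l - 1) * Hf l) * X l + (X l * - dphi l * (- (l - 1) * Hf l)) * l"
    using DERIV_mult[OF Lam_deriv[OF t] c] unfolding l_def by simp
  have e: "(- (l - 1) * Hf l) * X l + (X l * - dphi l * (- (l - 1) * Hf l)) * l
      = (l * X l) * (-bt * bach_q (l * X l) (- X l) * (Kc*l*(X l)^2))"
    unfolding dphi_def qd_def Hf_def by (rule E2_id[OF lp(1)])
  show ?thesis using m unfolding e S1_def S2_def S0sq[OF t] l_def[symmetric] by simp
qed

lemma dS0: assumes t: "t > T cc"
  shows "DERIV S0 t :> S0 t * (- bt * bach_p (- S1 t) (S2 t) * (S0 t)^2)"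
proof -
  define l where "l = Lam t"
  have lp: "l > 0" "l > 1" using Lam_gt[OF t] by (auto simp: l_def)
  have kl: "Kc * l > 0" using lp Kc_pos by simp
  have c: "DERIV (\<lambda>x. X (Lam x)) t :> X l * - dphi l * (- (l - 1) * Hf l)"
    unfolding l_def by (rule DERIV_chain2[OF X_deriv Lam_deriv[OF t]]) (use lp l_def in simp)
  have sq: "DERIV (\<lambda>x. sqrt (Kc * Lam x)) t :> inverse (sqrt (Kc * l)) / 2 * (Kc * (- (l - 1) * Hf l))"
    unfolding l_def by (rule DERIV_chain2[OF DERIV_real_sqrt DERIV_cmult[OF Lam_deriv[OF t]]]) (use kl l_def in simp)
  have m: "DERIV (\<lambda>x. sqrt (Kc * Lam x) * X (Lam x)) t :>
      (inverse (sqrt (Kc * l)) / 2 * (Kc * (- (l - 1) * Hf l))) * X l + (X l * - dphi l * (- (l - 1) * Hf l)) * sqrt (Kc * l)"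
    using DERIV_mult[OF sq c] unfolding l_def by simp
  have Z: "sqrt (Kc * l) > 0" "(sqrt (Kc * l))^2 = Kc * l" using kl by auto
  have e: "(inverse (sqrt (Kc * l)) / 2 * (Kc * (- (l - 1) * Hf l))) * X l + (X l * - dphi l * (- (l - 1) * Hf l)) * sqrt (Kc * l)
      = (sqrt (Kc * l) * X l) * (-bt * bach_p (- X l) (l * X l) * (Kc*l*(X l)^2))"
    unfolding dphi_def qd_def Hf_def by (rule E0_id[OF lp(1) Z])
  show ?thesis using m unfolding e S0sq[OF t] unfolding S1_def S2_def S0_def[abs_def] l_def[symmetric] by simp
qed

lemma rate_mult_at:
  assumes "DERIV f t :> f t * a" "DERIV g t :> g t * b"
  shows "DERIV (\<lambda>x. f x * g x) t :> (f t * g t) * (a + b)"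
proof -
  have "DERIV (\<lambda>x. f x * g x) t :> (f t * a) * g t + (g t * b) * f t" using DERIV_mult[OF assms] .
  moreover have "(f t * a) * g t + (g t * b) * f t = (f t * g t) * (a + b)" by (simp add: algebra_simps)
  ultimately show ?thesis by simp
qed

lemma S_pos: "t > T cc \<Longrightarrow> S0 t > 0 \<and> S1 t > 0 \<and> S2 t > 0"
  unfolding S0_def S1_def S2_def using Lam_gt[of t] Kc_pos X_pos by simp

lemma dS3: assumes t: "t > T cc"
  shows "DERIV S3 t :> S3 t * (3 * bt * bach_p (- S1 t) (S2 t) * (S0 t)^2)"
proof -
  define r0 where "r0 = - bt * bach_p (- S1 t) (S2 t) * (S0 t)^2"
  define r1 where "r1 = - bt * bach_q (- S1 t) (S2 t) * (S0 t)^2"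
  define r2 where "r2 = - bt * bach_q (S2 t) (- S1 t) * (S0 t)^2"
  have dP: "DERIV (\<lambda>x. S0 x * S1 x * S2 x) t :> (S0 t * S1 t * S2 t) * ((r0 + r1) + r2)"
    using rate_mult_at[OF rate_mult_at[OF dS0[OF t] dS1[OF t]] dS2[OF t]] unfolding r0_def r1_def r2_def .
  have nz: "S0 t * S1 t * S2 t \<noteq> 0" using S_pos[OF t] by simp
  have "DERIV (\<lambda>x. dh * inverse (S0 x * S1 x * S2 x)) t :>
      dh * (- (inverse (S0 t * S1 t * S2 t) * ((S0 t * S1 t * S2 t) * ((r0 + r1) + r2)) * inverse (S0 t * S1 t * S2 t)))"
    by (rule DERIV_cmult[OF DERIV_inverse'[OF dP nz]])
  moreover have "(\<lambda>x. dh * inverse (S0 x * S1 x * S2 x)) = S3" unfolding S3_def[abs_def] by (simp add: divide_inverse)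
  moreover have "dh * (- (inverse (S0 t * S1 t * S2 t) * ((S0 t * S1 t * S2 t) * ((r0 + r1) + r2)) * inverse (S0 t * S1 t * S2 t)))
      = S3 t * (- (r0 + r1 + r2))"
    unfolding S3_def using nz by (simp add: field_simps)
  moreover have "- (r0 + r1 + r2) = 3 * bt * bach_p (- S1 t) (S2 t) * (S0 t)^2"
    using sum_rates[of bt "S1 t" "S2 t" "S0 t"] unfolding r0_def r1_def r2_def by linarith
  ultimately show ?thesis by simp
qed

lemma S_init: "S0 0 = h0" "S1 0 = h1" "S2 0 = h2" "S3 0 = h3"
proof -
  have X0: "X l0 = h1" unfolding X_def using h1 by simp
  show s1: "S1 0 = h1" unfolding S1_def Lam_0 X0 ..
  show s2: "S2 0 = h2" unfolding S2_def Lam_0 X0 unfolding l0_def using h1 by simp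
  have "Kc * l0 = (h0 / h1)^2" unfolding Kc_def l0_def dh_def using h0 h1 h2 h3
    by (simp add: field_simps power2_eq_square eval_nat_numeral)
  hence "sqrt (Kc * l0) = h0 / h1" using h0 h1 by simp
  thus s0: "S0 0 = h0" unfolding S0_def Lam_0 X0 using h1 by simp
  show "S3 0 = h3" unfolding S3_def s0 s1 s2 dh_def using h0 h1 h2 by simp
qed

lemma exists_sol: "bach_sol h0 h1 h2 h3 S0 S1 S2 S3"
proof -
  have bteq: "1 / (6 * (h0*h1*h2*h3)^2) = bt" unfolding bt_def dh_def ..
  have tc: "t \<ge> 0 \<Longrightarrow> t > T cc" for t using T_cc by simp
  show ?thesis unfolding bach_sol_def Let_def bteq
  proof (intro conjI allI impI)
    show "S0 0 = h0" "S1 0 = h1" "S2 0 = h2" "S3 0 = h3" by (rule S_init)+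
  next
    fix t :: real assume "t \<ge> 0"
    hence t: "t > T cc" by (rule tc)
    have e0: "S0 t * (- bt * bach_p (- S1 t) (S2 t) * (S0 t)^2) = - bt * bach_p (- S1 t) (S2 t) * (S0 t)^3"
      by (simp add: power2_eq_square power3_eq_cube algebra_simps)
    show "(S0 has_real_derivative - bt * bach_p (- S1 t) (S2 t) * (S0 t)^3) (at t within {0..})"
      using has_field_derivative_at_within[OF dS0[OF t]] unfolding e0 .
  next
    fix t :: real assume "t \<ge> 0"
    hence t: "t > T cc" by (rule tc)
    have e1: "S1 t * (- bt * bach_q (- S1 t) (S2 t) * (S0 t)^2) = - bt * bach_q (- S1 t) (S2 t) * (S0 t)^2 * S1 t"
      by (simp add: algebra_simps)
    show "(S1 has_real_derivative - bt * bach_q (- S1 t) (S2 t) * (S0 t)^2 * S1 t) (at t within {0..})"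
      using has_field_derivative_at_within[OF dS1[OF t]] unfolding e1 .
  next
    fix t :: real assume "t \<ge> 0"
    hence t: "t > T cc" by (rule tc)
    have e2: "S2 t * (- bt * bach_q (S2 t) (- S1 t) * (S0 t)^2) = - bt * bach_q (S2 t) (- S1 t) * (S0 t)^2 * S2 t"
      by (simp add: algebra_simps)
    show "(S2 has_real_derivative - bt * bach_q (S2 t) (- S1 t) * (S0 t)^2 * S2 t) (at t within {0..})"
      using has_field_derivative_at_within[OF dS2[OF t]] unfolding e2 .
  next
    fix t :: real assume "t \<ge> 0"
    hence t: "t > T cc" by (rule tc)
    have e3: "S3 t * (3 * bt * bach_p (- S1 t) (S2 t) * (S0 t)^2) = 3 * bt * bach_p (- S1 t) (S2 t) * (S0 t)^2 * S3 t"
      by (simp add: algebra_simps)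
    show "(S3 has_real_derivative 3 * bt * bach_p (- S1 t) (S2 t) * (S0 t)^2 * S3 t) (at t within {0..})"
      using has_field_derivative_at_within[OF dS3[OF t]] unfolding e3 .
  qed
qed

end



lemma bp0: "bach_p (- x) x = 0" unfolding bach_p_def by algebra
lemma bq0: "bach_q (- x) x = 0" unfolding bach_q_def by algebra
lemma bq0': "bach_q x (- x) = 0" unfolding bach_q_def by algebra

theorem theorem5p6:
  fixes h0 h1 h2 h3 :: real
  assumes "h0 > 0" "h1 > 0" "h2 > 0" "h3 > 0"
  defines "dh \<equiv> h0 * h1 * h2 * h3"
  defines "\<eta> \<equiv> (h1 * h2)^25 / ((h2 + h1)^4 * (2*h2^2 - h1*h2 + 2*h1^2)^3)"
  shows "(\<exists>g0 g1 g2 g3. bach_sol h0 h1 h2 h3 g0 g1 g2 g3) \<and>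
    (\<forall>g0 g1 g2 g3. bach_sol h0 h1 h2 h3 g0 g1 g2 g3 \<longrightarrow>
       mono_on {0..} g3 \<and>
       (\<forall>t\<ge>0. (g1 t * g2 t)^25 =
           \<eta> * (g2 t + g1 t)^4 * (2 * (g2 t)^2 - g1 t * g2 t + 2 * (g1 t)^2)^3) \<and>
       (g1 \<longlongrightarrow> (432 * \<eta>) powr (1/40)) at_top \<and>
       (g2 \<longlongrightarrow> (432 * \<eta>) powr (1/40)) at_top \<and>
       (g0 \<longlongrightarrow> sqrt (h0^3 * h3 / dh) * (432 * \<eta>) powr (1/40)) at_top \<and>
       (g3 \<longlongrightarrow> sqrt (dh^3 / (h0^3 * h3)) * (432 * \<eta>) powr (-3/40)) at_top \<and>
       (h1 = h2 \<longrightarrow> (\<forall>t\<ge>0. g0 t = h0 \<and> g1 t = h1 \<and> g2 t = h2 \<and> g3 t = h3)) \<and>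
       (h1 < h2 \<longrightarrow> (\<forall>t\<ge>0. g1 t < g2 t) \<and> strict_mono_on {0..} g1 \<and>
           strict_antimono_on {0..} g2))"

proof -
  have ex: "\<exists>g0 g1 g2 g3. bach_sol h0 h1 h2 h3 g0 g1 g2 g3"
  proof (cases "h1 = h2")
    case True
    have "bach_sol h0 h1 h2 h3 (\<lambda>_. h0) (\<lambda>_. h1) (\<lambda>_. h2) (\<lambda>_. h3)"
      unfolding bach_sol_def Let_def using True by (simp add: bp0 bq0 bq0')
    thus ?thesis by blast
  next
    case False
    then consider "h1 < h2" | "h2 < h1" by linarith
    thus ?thesis
    proof cases
      case 1
      interpret E: exi h0 h1 h2 h3 by unfold_locales (use assms 1 in auto)
      show ?thesis using E.exists_sol by blast
    next
      case 2
      interpret E: exi h0 h2 h1 h3 by unfold_locales (use assms 2 in auto)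
      have "bsol h0 h2 h1 h3 E.S0 E.S1 E.S2 E.S3" by unfold_locales (use assms E.exists_sol in auto)
      hence "bsol h0 h1 h2 h3 E.S0 E.S2 E.S1 E.S3" by (rule bsol.swap)
      hence "bach_sol h0 h1 h2 h3 E.S0 E.S2 E.S1 E.S3" by (rule bsol.sol)
      thus ?thesis by blast
    qed
  qed
  have all: "\<forall>g0 g1 g2 g3. bach_sol h0 h1 h2 h3 g0 g1 g2 g3 \<longrightarrow>
       mono_on {0..} g3 \<and>
       (\<forall>t\<ge>0. (g1 t * g2 t)^25 =
           \<eta> * (g2 t + g1 t)^4 * (2 * (g2 t)^2 - g1 t * g2 t + 2 * (g1 t)^2)^3) \<and>
       (g1 \<longlongrightarrow> (432 * \<eta>) powr (1/40)) at_top \<and>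
       (g2 \<longlongrightarrow> (432 * \<eta>) powr (1/40)) at_top \<and>
       (g0 \<longlongrightarrow> sqrt (h0^3 * h3 / dh) * (432 * \<eta>) powr (1/40)) at_top \<and>
       (g3 \<longlongrightarrow> sqrt (dh^3 / (h0^3 * h3)) * (432 * \<eta>) powr (-3/40)) at_top \<and>
       (h1 = h2 \<longrightarrow> (\<forall>t\<ge>0. g0 t = h0 \<and> g1 t = h1 \<and> g2 t = h2 \<and> g3 t = h3)) \<and>
       (h1 < h2 \<longrightarrow> (\<forall>t\<ge>0. g1 t < g2 t) \<and> strict_mono_on {0..} g1 \<and>
           strict_antimono_on {0..} g2)"
  proof (intro allI impI)
    fix g0 g1 g2 g3 assume s: "bach_sol h0 h1 h2 h3 g0 g1 g2 g3"
    interpret S: bsol h0 h1 h2 h3 g0 g1 g2 g3 by unfold_locales (use assms s in auto)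
    have eta_eq: "\<eta> = S.eta" unfolding \<eta>_def S.eta_def ..
    have "\<exists>L>0. (g1 \<longlongrightarrow> L) at_top \<and> (g2 \<longlongrightarrow> L) at_top"
    proof (cases "h1 = h2")
      case True
      have e1: "\<forall>\<^sub>F t in at_top. h1 = g1 t" using eventually_ge_at_top[of "0::real"]
        by eventually_elim (use S.eq_case[OF True] in auto)
      have e2: "\<forall>\<^sub>F t in at_top. h1 = g2 t" using eventually_ge_at_top[of "0::real"]
        by eventually_elim (use S.eq_case[OF True] True in auto)
      have "(g1 \<longlongrightarrow> h1) at_top" by (rule Lim_transform_eventually[OF tendsto_const e1])
      moreover have "(g2 \<longlongrightarrow> h1) at_top" by (rule Lim_transform_eventually[OF tendsto_const e2])
      ultimately show ?thesis using assms by blast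
    next
      case False
      then consider "h1 < h2" | "h2 < h1" by linarith
      thus ?thesis
      proof cases
        case 1 thus ?thesis using S.lt_case by blast
      next
        case 2
        interpret S2: bsol h0 h2 h1 h3 g0 g2 g1 g3 by (rule S.swap)
        show ?thesis using S2.lt_case[OF 2] by blast
      qed
    qed
    then obtain L where L: "L > 0" "(g1 \<longlongrightarrow> L) at_top" "(g2 \<longlongrightarrow> L) at_top" by blast
    note lim = S.lims[OF L(2) L(3) L(1)]
    show "mono_on {0..} g3 \<and>
       (\<forall>t\<ge>0. (g1 t * g2 t)^25 =
           \<eta> * (g2 t + g1 t)^4 * (2 * (g2 t)^2 - g1 t * g2 t + 2 * (g1 t)^2)^3) \<and>
       (g1 \<longlongrightarrow> (432 * \<eta>) powr (1/40)) at_top \<and>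
       (g2 \<longlongrightarrow> (432 * \<eta>) powr (1/40)) at_top \<and>
       (g0 \<longlongrightarrow> sqrt (h0^3 * h3 / dh) * (432 * \<eta>) powr (1/40)) at_top \<and>
       (g3 \<longlongrightarrow> sqrt (dh^3 / (h0^3 * h3)) * (432 * \<eta>) powr (-3/40)) at_top \<and>
       (h1 = h2 \<longrightarrow> (\<forall>t\<ge>0. g0 t = h0 \<and> g1 t = h1 \<and> g2 t = h2 \<and> g3 t = h3)) \<and>
       (h1 < h2 \<longrightarrow> (\<forall>t\<ge>0. g1 t < g2 t) \<and> strict_mono_on {0..} g1 \<and>
           strict_antimono_on {0..} g2)"
      unfolding eta_eq dh_def
      using S.mono3 S.rel lim S.eq_case S.lt_case by blast
  qed
  show ?thesis using ex all by blast
qed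


end
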